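(* Let $Q_{2^n}$ ($n\ge 3$) be the generalized quaternion group of order $2^n$. A non-identity element $g\in Q_{2^n}$ is an isolated vertex of the undeleted difference graph of $Q_{2^n}$ if and only if $g$ has order $2$.
   Context: $Q_{2^n}=\langle x,y\mid x^{2^{n-1}}=1,\ y^2=x^{2^{n-2}},\ y^{-1}xy=x^{-1}\rangle$. For a finite group $G$ with identity $e$: the intersection power graph $\mathcal{G}_I(G)$ has vertex set $G$, two distinct non-identity vertices $x,y$ being adjacent iff $\langle x\rangle\cap\langle y\rangle\neq\{e\}$, and $e$ being adjacent to every other vertex. The power graph $\mathcal{P}(G)$ has vertex set $G$, two distinct vertices being adjacent iff one is a power of the other. The undeleted difference graph of $G$ has vertex set $G$ and edge set $E(\mathcal{G}_I(G))\setminus E(\mathcal{P}(G))$. *)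

theory Defs
  imports "HOL-Algebra.Algebra"
begin

definition ipg_adj :: "('a, 'b) monoid_scheme \<Rightarrow> 'a \<Rightarrow> 'a \<Rightarrow> bool" where
  "ipg_adj G a b \<longleftrightarrow> a \<in> carrier G \<and> b \<in> carrier G \<and> a \<noteq> b \<and>
     (a = \<one>\<^bsub>G\<^esub> \<or> b = \<one>\<^bsub>G\<^esub> \<or>
      generate G {a} \<inter> generate G {b} \<noteq> {\<one>\<^bsub>G\<^esub>})"

definition power_adj :: "('a, 'b) monoid_scheme \<Rightarrow> 'a \<Rightarrow> 'a \<Rightarrow> bool" where
  "power_adj G a b \<longleftrightarrow> a \<in> carrier G \<and> b \<in> carrier G \<and> a \<noteq> b \<and>
     (\<exists>k::int. a = b [^]\<^bsub>G\<^esub> k \<or> b = a [^]\<^bsub>G\<^esub> k)"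

definition diff_adj :: "('a, 'b) monoid_scheme \<Rightarrow> 'a \<Rightarrow> 'a \<Rightarrow> bool" where
  "diff_adj G a b \<longleftrightarrow> ipg_adj G a b \<and> \<not> power_adj G a b"

definition diff_isolated :: "('a, 'b) monoid_scheme \<Rightarrow> 'a \<Rightarrow> bool" where
  "diff_isolated G g \<longleftrightarrow> g \<in> carrier G \<and> (\<forall>h \<in> carrier G. \<not> diff_adj G g h)"

end

theory Submission
  imports Defs
begin

locale quat = group G for G (structure) +
  fixes n :: nat and x y :: 'a
  assumes n3: "n \<ge> 3" and fin: "finite (carrier G)" and ordG: "order G = 2 ^ n"
    and xc: "x \<in> carrier G" and yc: "y \<in> carrier G"
    and gen: "generate G {x, y} = carrier G"
    and rx: "x [^] ((2::nat) ^ (n - 1)) = \<one>"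
    and ry: "y [^] (2::nat) = x [^] ((2::nat) ^ (n - 2))"
    and rc: "inv y \<otimes> x \<otimes> y = inv x"
begin

definition "XX = generate G {x}"
definition "z = x [^] ((2::nat) ^ (n - 2))"

lemma X_sub: "subgroup XX G"
  unfolding XX_def using generate_is_subgroup xc by auto

lemma X_car: "a \<in> XX \<Longrightarrow> a \<in> carrier G"
  using X_sub subgroup.subset by blast

lemma X_pow: "XX = {x [^] (k::int) | k. k \<in> UNIV}"
  unfolding XX_def using generate_pow xc by auto

lemma x_in: "x \<in> XX" unfolding XX_def by (simp add: generate.incl)

lemma z_in: "z \<in> XX"
  unfolding z_def X_pow by (metis (mono_tags, lifting) UNIV_I int_pow_int mem_Collect_eq)

lemma X_comm: "a \<in> XX \<Longrightarrow> b \<in> XX \<Longrightarrow> a \<otimes> b = b \<otimes> a"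
  unfolding X_pow using xc by (auto simp flip: int_pow_mult simp: add.commute)

lemma cancel1: "a \<in> carrier G \<Longrightarrow> c \<in> carrier G \<Longrightarrow> a \<otimes> (inv a \<otimes> c) = c"
  by (simp add: m_assoc[symmetric])

lemma conj_hom: "(\<lambda>a. inv y \<otimes> a \<otimes> y) \<in> hom G G"
  unfolding hom_def using yc by (auto simp: m_assoc cancel1)

lemma y_comm: "a \<in> XX \<Longrightarrow> y \<otimes> a = inv a \<otimes> y"
proof -
  assume "a \<in> XX"
  then obtain k where k: "a = x [^] (k::int)" unfolding X_pow by auto
  have "inv y \<otimes> a \<otimes> y = (inv y \<otimes> x \<otimes> y) [^] k"
    unfolding k using hom_int_pow[OF conj_hom xc is_group is_group] by simp
  also have "\<dots> = inv a" unfolding rc k using xc int_pow_inv by simp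
  finally have "inv y \<otimes> a \<otimes> y = inv a" .
  then have "y \<otimes> (inv y \<otimes> a \<otimes> y) = y \<otimes> inv a" by simp
  then have "a \<otimes> y = y \<otimes> inv a" using yc X_car[OF \<open>a \<in> XX\<close>] by (simp add: m_assoc[symmetric])
  then have "inv a \<otimes> (a \<otimes> y) = inv a \<otimes> (y \<otimes> inv a)" by simp
  then have "y = inv a \<otimes> y \<otimes> inv a" using yc X_car[OF \<open>a \<in> XX\<close>] by (simp add: m_assoc[symmetric])
  then have "y \<otimes> a = inv a \<otimes> y \<otimes> inv a \<otimes> a" by simp
  then show ?thesis using yc X_car[OF \<open>a \<in> XX\<close>] by (simp add: m_assoc)
qed

lemma yy: "y \<otimes> y = z"
  using ry yc unfolding z_def by (simp add: numeral_2_eq_2)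

definition "YY = (\<lambda>a. a \<otimes> y) ` XX"

lemma XXm: "a \<in> XX \<Longrightarrow> b \<in> XX \<Longrightarrow> a \<otimes> b \<in> XX"
  by (rule subgroup.m_closed[OF X_sub])
lemma XXi: "a \<in> XX \<Longrightarrow> inv a \<in> XX"
  by (rule subgroup.m_inv_closed[OF X_sub])
lemma YYI: "a \<in> XX \<Longrightarrow> a \<otimes> y \<in> YY"
  unfolding YY_def by blast

lemma inv_y: "inv y = y \<otimes> inv z"
proof -
  have "y \<otimes> inv z = y \<otimes> inv (y \<otimes> y)" using yy by simp
  also have "\<dots> = y \<otimes> (inv y \<otimes> inv y)" using yc by (simp add: inv_mult_group)
  also have "\<dots> = inv y" using yc by (simp add: cancel1)
  finally show ?thesis by simp
qed

lemma m1: "a \<in> XX \<Longrightarrow> b \<in> XX \<Longrightarrow> a \<otimes> (b \<otimes> y) \<in> YY"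
  using YYI[OF XXm, of a b] X_car yc by (simp add: m_assoc)
lemma m2: "a \<in> XX \<Longrightarrow> b \<in> XX \<Longrightarrow> (a \<otimes> y) \<otimes> b \<in> YY"
proof -
  assume a: "a \<in> XX" and b: "b \<in> XX"
  have "(a \<otimes> y) \<otimes> b = a \<otimes> (y \<otimes> b)" using a b X_car yc by (simp add: m_assoc)
  also have "\<dots> = (a \<otimes> inv b) \<otimes> y" using a b X_car yc y_comm[OF b] by (simp add: m_assoc)
  finally show ?thesis using YYI[OF XXm[OF a XXi[OF b]]] by simp
qed
lemma m3: "a \<in> XX \<Longrightarrow> b \<in> XX \<Longrightarrow> (a \<otimes> y) \<otimes> (b \<otimes> y) \<in> XX"
proof -
  assume a: "a \<in> XX" and b: "b \<in> XX"
  have "(a \<otimes> y) \<otimes> (b \<otimes> y) = a \<otimes> (y \<otimes> b) \<otimes> y" using a b X_car yc by (simp add: m_assoc)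
  also have "\<dots> = (a \<otimes> inv b) \<otimes> (y \<otimes> y)" using a b X_car yc y_comm[OF b] by (simp add: m_assoc)
  finally show ?thesis using XXm[OF XXm[OF a XXi[OF b]] z_in] yy by simp
qed
lemma i2: "a \<in> XX \<Longrightarrow> inv (a \<otimes> y) \<in> YY"
proof -
  assume a: "a \<in> XX"
  have zc: "z \<in> carrier G" using z_in X_car by blast
  have "inv (a \<otimes> y) = inv y \<otimes> inv a" using a X_car yc by (simp add: inv_mult_group)
  also have "\<dots> = y \<otimes> (inv z \<otimes> inv a)" using inv_y a X_car yc zc by (simp add: m_assoc)
  also have "\<dots> = inv (inv z \<otimes> inv a) \<otimes> y" using y_comm[OF XXm[OF XXi[OF z_in] XXi[OF a]]] .
  finally show ?thesis using YYI[OF XXi[OF XXm[OF XXi[OF z_in] XXi[OF a]]]] by simp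
qed

lemma cover: "carrier G \<subseteq> XX \<union> YY"
proof
  fix g assume "g \<in> carrier G"
  then have "g \<in> generate G {x, y}" using gen by simp
  then show "g \<in> XX \<union> YY"
  proof (induction rule: generate.induct)
    case one
    then show ?case using X_sub subgroup.one_closed by blast
  next
    case (incl h)
    then show ?case using x_in YYI[OF subgroup.one_closed[OF X_sub]] yc by auto
  next
    case (inv h)
    have "inv y \<in> YY" using i2[OF subgroup.one_closed[OF X_sub]] yc by simp
    then show ?case using XXi[OF x_in] inv by auto
  next
    case (eng h1 h2)
    then show ?case using XXm m1 m2 m3 unfolding YY_def by auto
  qed
qed

lemma ordx: "ord x = 2 ^ (n - 1)"
proof -
  have finX: "finite XX" using fin X_car by (meson finite_subset subsetI)
  have "order G \<le> card (XX \<union> YY)"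
    unfolding order_def using cover finX by (simp add: YY_def card_mono)
  also have "\<dots> \<le> card XX + card YY" by (rule card_Un_le)
  also have "card YY \<le> card XX" unfolding YY_def by (rule card_image_le[OF finX])
  finally have "order G \<le> 2 * ord x" using generate_pow_card[OF xc] unfolding XX_def by simp
  then have a: "2 ^ n \<le> 2 * ord x" using ordG by simp
  have "ord x dvd 2 ^ (n - 1)" using rx pow_eq_id xc by blast
  then have b: "ord x \<le> 2 ^ (n - 1)" by (simp add: dvd_imp_le)
  obtain m where "n = m + 3" using n3 by (metis add.commute le_Suc_ex)
  then have "(2::nat) ^ n = 2 * 2 ^ (n - 1)" by (simp add: power_add)
  then show ?thesis using a b by linarith
qed

lemma x2: "(2::nat) ^ (n - 1) = 2 * 2 ^ (n - 2)"
proof -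
  obtain m where "n = m + 3" using n3 by (metis add.commute le_Suc_ex)
  then show ?thesis by (simp add: power_add)
qed

lemma zc: "z \<in> carrier G" using X_car[OF z_in] .

lemma z_ne: "z \<noteq> \<one>"
proof
  assume "z = \<one>"
  then have "ord x dvd 2 ^ (n - 2)" using pow_eq_id xc unfolding z_def by blast
  then show False unfolding ordx x2 by (simp add: dvd_imp_le)
qed

lemma zz: "z \<otimes> z = \<one>"
proof -
  have "z \<otimes> z = x [^] ((2::nat) ^ (n - 2) + 2 ^ (n - 2))" unfolding z_def using xc by (simp add: nat_pow_mult)
  also have "\<dots> = \<one>" using rx x2 by (simp add: mult_2[symmetric])
  finally show ?thesis .
qed

lemma xx_ne: "x \<otimes> x \<noteq> \<one>"
proof
  assume "x \<otimes> x = \<one>"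
  then have "x [^] (2::nat) = \<one>" using xc by (simp add: numeral_2_eq_2)
  then have "ord x dvd 2" using pow_eq_id xc by blast
  then have "(2::nat) ^ (n - 1) \<le> 2" unfolding ordx by (simp add: dvd_imp_le)
  moreover have "(2::nat) ^ (n - 1) \<ge> 2 ^ 2" using n3 by (intro power_increasing) auto
  ultimately show False by simp
qed

lemma y_notin: "y \<notin> XX"
proof
  assume "y \<in> XX"
  then have "y \<otimes> x = x \<otimes> y" using X_comm x_in by metis
  then have "inv x \<otimes> y = x \<otimes> y" using y_comm[OF x_in] by simp
  then have "inv x = x" using xc yc by simp
  then have "x \<otimes> x = \<one>" using xc by (metis r_inv)
  then show False using xx_ne by simp
qed

lemma disj: "a \<in> XX \<Longrightarrow> a \<otimes> y \<notin> XX"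
proof
  assume a: "a \<in> XX" and "a \<otimes> y \<in> XX"
  then have "inv a \<otimes> (a \<otimes> y) \<in> XX" using XXm[OF XXi[OF a]] by metis
  then show False using a X_car yc y_notin by (simp add: m_assoc[symmetric])
qed

lemma Ysq: "a \<in> XX \<Longrightarrow> (a \<otimes> y) \<otimes> (a \<otimes> y) = z"
proof -
  assume a: "a \<in> XX"
  have "(a \<otimes> y) \<otimes> (a \<otimes> y) = a \<otimes> (y \<otimes> a) \<otimes> y" using a X_car yc by (simp add: m_assoc)
  also have "\<dots> = (a \<otimes> inv a) \<otimes> (y \<otimes> y)" using a X_car yc y_comm[OF a] by (simp add: m_assoc cancel1)
  finally show ?thesis using a X_car yy zc by simp
qed

lemma ar: "(N::int) \<noteq> 0 \<Longrightarrow> 2*N dvd 2*i \<Longrightarrow> \<not> 2*N dvd i \<Longrightarrow> 2*N dvd N - i"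
proof -
  assume N: "N \<noteq> 0" and h1: "2*N dvd 2*i" and h2: "\<not> 2*N dvd i"
  obtain m where m: "2*i = 2*N*m" using h1 by (auto elim: dvdE)
  then have im: "i = N*m" by simp
  have "odd m"
  proof
    assume "even m"
    then obtain q where "m = 2*q" by (auto elim: evenE)
    then have "i = 2*N*q" using im by simp
    then show False using h2 by simp
  qed
  then obtain q where "m = 2*q+1" by (auto elim: oddE)
  then have "N - i = 2*N*(-q)" using im by (simp add: algebra_simps)
  then show ?thesis by (metis dvd_triv_left)
qed

lemma invol: "g \<in> carrier G \<Longrightarrow> g \<noteq> \<one> \<Longrightarrow> g \<otimes> g = \<one> \<Longrightarrow> g = z"
proof -
  assume gc: "g \<in> carrier G" and g1: "g \<noteq> \<one>" and gg: "g \<otimes> g = \<one>"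
  have "g \<in> XX \<union> YY" using cover gc by (rule subsetD)
  moreover have "g \<notin> YY"
  proof
    assume "g \<in> YY"
    then obtain a where "a \<in> XX" "g = a \<otimes> y" unfolding YY_def by auto
    then have "g \<otimes> g = z" using Ysq by simp
    then show False using gg z_ne by simp
  qed
  ultimately have "g \<in> XX" by simp
  then obtain i where gi: "g = x [^] (i::int)" unfolding X_pow by auto
  define N where "N = int (2 ^ (n - 2))"
  have oN: "int (ord x) = 2 * N" unfolding ordx x2 N_def by simp
  have zN: "z = x [^] N" unfolding z_def N_def by (simp only: int_pow_int)
  have "x [^] (i + i) = x [^] i \<otimes> x [^] i" by (rule int_pow_mult[OF xc])
  moreover have "(2::int)*i = i + i" by simp
  ultimately have "x [^] (2*i) = g \<otimes> g" using gi by metis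
  then have "x [^] (2*i) = \<one>" using gg by (rule trans)
  then have d1: "2*N dvd 2*i" using int_pow_eq_id[OF xc, of "2*i"] unfolding oN by blast
  have d2: "\<not> 2*N dvd i" using g1 int_pow_eq_id[OF xc, of i] unfolding oN gi by blast
  have "N \<noteq> 0" unfolding N_def by simp
  then have "2*N dvd N - i" using ar d1 d2 by simp
  then show "g = z" unfolding gi zN using int_pow_eq[OF xc, of i N] unfolding oN by blast
qed

lemma ord_iff: "g \<in> carrier G \<Longrightarrow> g \<noteq> \<one> \<Longrightarrow> ord g = 2 \<longleftrightarrow> g = z"
proof
  assume gc: "g \<in> carrier G" and g1: "g \<noteq> \<one>" and o: "ord g = 2"
  have "g [^] (2::nat) = \<one>" using pow_eq_id[OF gc] o by simp
  then have "g \<otimes> g = \<one>" using gc by (simp add: numeral_2_eq_2)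
  then show "g = z" using invol gc g1 by simp
next
  assume gc: "g \<in> carrier G" and g1: "g \<noteq> \<one>" and gz: "g = z"
  have "z [^] (2::nat) = \<one>" using zz zc by (simp add: numeral_2_eq_2)
  then have d: "ord z dvd 2" using pow_eq_id[OF zc] by simp
  have "ord z \<noteq> 1" using ord_eq_1[OF zc] z_ne by simp
  moreover have "ord z \<noteq> 0" using d by (metis dvd_0_left_iff zero_neq_numeral)
  moreover have "ord z \<le> 2" using d by (simp add: dvd_imp_le)
  ultimately show "ord g = 2" using gz by simp
qed

lemma pz: "h \<in> carrier G \<Longrightarrow> h \<noteq> \<one> \<Longrightarrow> \<exists>k::nat. h [^] k = z"
proof -
  assume hc: "h \<in> carrier G" and h1: "h \<noteq> \<one>"
  have "ord h dvd 2 ^ n" using ord_dvd_group_order[OF hc] ordG by simp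
  then have "\<exists>a\<le>n. ord h = 2 ^ a" using divides_primepow_nat[of 2 "ord h" n] by simp
  then obtain a where a: "ord h = 2 ^ a" by (elim exE conjE)
  have "a \<noteq> 0" using a ord_eq_1[OF hc] h1 by (metis power_0)
  then obtain b where b: "a = Suc b" by (metis not0_implies_Suc)
  define w where "w = h [^] ((2::nat) ^ b)"
  have wc: "w \<in> carrier G" unfolding w_def using hc by (rule nat_pow_closed)
  have "w \<otimes> w = h [^] ((2::nat) ^ b + 2 ^ b)" unfolding w_def using hc by (rule nat_pow_mult)
  also have "(2::nat) ^ b + 2 ^ b = ord h" unfolding a b by simp
  also have "h [^] ord h = \<one>" using hc by (rule pow_ord_eq_1)
  finally have ww: "w \<otimes> w = \<one>" .
  have "w \<noteq> \<one>"
  proof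
    assume "w = \<one>"
    then have "ord h dvd 2 ^ b" using pow_eq_id[OF hc] unfolding w_def by metis
    then have "(2::nat) ^ Suc b \<le> 2 ^ b" unfolding a b by (rule dvd_imp_le) simp
    then show False by simp
  qed
  then have "w = z" using invol[OF wc _ ww] by metis
  then show ?thesis unfolding w_def by (rule exI)
qed

lemma zgen: "h \<in> carrier G \<Longrightarrow> h \<noteq> \<one> \<Longrightarrow> z \<in> generate G {h}"
proof -
  assume hc: "h \<in> carrier G" and h1: "h \<noteq> \<one>"
  obtain k :: nat where "h [^] k = z" using pz[OF hc h1] by (elim exE)
  then have "z = h [^] (int k)" by (simp add: int_pow_int)
  then show ?thesis unfolding generate_pow[OF hc] by blast
qed

lemma pow_comm: "c \<in> carrier G \<Longrightarrow> c \<otimes> c [^] (k::int) = c [^] k \<otimes> c"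
proof -
  assume cc: "c \<in> carrier G"
  have "c \<otimes> c [^] k = c [^] (1 + k)" using int_pow_mult[OF cc, of 1 k] cc by simp
  also have "\<dots> = c [^] (k + 1)" by (simp add: add.commute)
  also have "\<dots> = c [^] k \<otimes> c" using int_pow_mult[OF cc, of k 1] cc by simp
  finally show ?thesis .
qed

lemma isoz: "diff_isolated G z"
  unfolding diff_isolated_def
proof (intro conjI ballI zc)
  fix h assume hc: "h \<in> carrier G"
  show "\<not> diff_adj G z h"
  proof (cases "h = z")
    case True then show ?thesis by (simp add: diff_adj_def ipg_adj_def)
  next
    case False
    have "power_adj G z h"
    proof (cases "h = \<one>")
      case True
      then have "h = z [^] (0::int)" by simp
      then show ?thesis unfolding power_adj_def using zc hc False by blast
    next
      case h1: False
      obtain k :: nat where "h [^] k = z" using pz[OF hc h1] by (elim exE)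
      then have "z = h [^] (int k)" by (simp add: int_pow_int)
      then show ?thesis unfolding power_adj_def using zc hc False by blast
    qed
    then show ?thesis by (simp add: diff_adj_def)
  qed
qed

lemma one_XX: "\<one> \<in> XX" using subgroup.one_closed[OF X_sub] .

lemma notiso: "g \<in> carrier G \<Longrightarrow> g \<noteq> \<one> \<Longrightarrow> g \<noteq> z \<Longrightarrow> \<not> diff_isolated G g"
proof -
  assume gc: "g \<in> carrier G" and g1: "g \<noteq> \<one>" and gz: "g \<noteq> z"
  have zg: "z \<in> generate G {g}" using zgen gc g1 by simp
  have "g \<in> XX \<union> YY" using cover gc by (rule subsetD)
  then show ?thesis
  proof
    assume gX: "g \<in> XX"
    have y1: "y \<noteq> \<one>" using y_notin one_XX by metis
    have zy: "z \<in> generate G {y}" using zgen yc y1 by simp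
    have gy: "g \<noteq> y" using gX y_notin by metis
    have ipg: "ipg_adj G g y" unfolding ipg_adj_def using gc yc gy zg zy z_ne by blast
    have np: "\<not> power_adj G g y"
    proof
      assume "power_adj G g y"
      then obtain k :: int where "g = y [^] k \<or> y = g [^] k" unfolding power_adj_def by blast
      then show False
      proof
        assume gk: "g = y [^] k"
        have "y \<otimes> g = g \<otimes> y" unfolding gk using pow_comm[OF yc] .
        then have "inv g \<otimes> y = g \<otimes> y" using y_comm[OF gX] by simp
        then have "inv g = g" using gc yc by simp
        then have "g \<otimes> g = \<one>" using gc by (metis r_inv)
        then show False using invol gc g1 gz by simp
      next
        assume "y = g [^] k"
        then have "y \<in> XX" using subgroup_int_pow_closed[OF X_sub gX] by simp
        then show False using y_notin by simp
      qed
    qed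
    show ?thesis unfolding diff_isolated_def diff_adj_def using ipg np yc by blast
  next
    assume "g \<in> YY"
    then obtain a where aX: "a \<in> XX" and ga: "g = a \<otimes> y" unfolding YY_def by auto
    have ac: "a \<in> carrier G" using X_car[OF aX] .
    have x1: "x \<noteq> \<one>" using xx_ne by auto
    have zx: "z \<in> generate G {x}" using zgen xc x1 by simp
    have gx: "g \<noteq> x" using disj[OF aX] x_in ga by metis
    have ipg: "ipg_adj G g x" unfolding ipg_adj_def using gc xc gx zg zx z_ne by blast
    have np: "\<not> power_adj G g x"
    proof
      assume "power_adj G g x"
      then obtain k :: int where "g = x [^] k \<or> x = g [^] k" unfolding power_adj_def by blast
      then show False
      proof
        assume "g = x [^] k"
        then have "g \<in> XX" unfolding X_pow by blast
        then show False using disj[OF aX] ga by simp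
      next
        assume xk: "x = g [^] k"
        have "x \<otimes> g = g \<otimes> x" unfolding xk using pow_comm[OF gc] by (rule sym)
        then have "x \<otimes> (a \<otimes> y) = (a \<otimes> y) \<otimes> x" unfolding ga .
        also have "\<dots> = a \<otimes> (y \<otimes> x)" using ac yc xc by (simp add: m_assoc)
        also have "\<dots> = a \<otimes> (inv x \<otimes> y)" using y_comm[OF x_in] by simp
        finally have e: "x \<otimes> (a \<otimes> y) = a \<otimes> (inv x \<otimes> y)" .
        have "x \<otimes> (a \<otimes> y) = a \<otimes> (x \<otimes> y)"
          using X_comm[OF x_in aX] ac yc xc by (metis m_assoc)
        then have "a \<otimes> (x \<otimes> y) = a \<otimes> (inv x \<otimes> y)" using e by simp
        then have "x = inv x" using ac xc yc by simp
        then have "x \<otimes> x = \<one>" using xc by (metis r_inv)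
        then show False using xx_ne by simp
      qed
    qed
    show ?thesis unfolding diff_isolated_def diff_adj_def using ipg np xc by blast
  qed
qed

lemma main: "g \<in> carrier G \<Longrightarrow> g \<noteq> \<one> \<Longrightarrow> diff_isolated G g \<longleftrightarrow> ord g = 2"
  using ord_iff isoz notiso by metis

end

theorem lemma5p3:
  fixes G (structure) and n :: nat and x y g :: 'a
  assumes "n \<ge> 3"
    and "group G"
    and "finite (carrier G)"
    and "order G = 2 ^ n"
    and "x \<in> carrier G" and "y \<in> carrier G"
    and "generate G {x, y} = carrier G"
    and "x [^] ((2::nat) ^ (n - 1)) = \<one>"
    and "y [^] (2::nat) = x [^] ((2::nat) ^ (n - 2))"
    and "inv y \<otimes> x \<otimes> y = inv x"
    and "g \<in> carrier G" and "g \<noteq> \<one>"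
  shows "diff_isolated G g \<longleftrightarrow> group.ord G g = 2"
proof -
  have q: "quat G n x y"
    unfolding quat_def quat_axioms_def using assms by blast
  show ?thesis using quat.main[OF q assms(11) assms(12)] .
qed

end
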